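(* Let $X$ be a finite alphabet and let $w \in \overline{X}^*$ be a word representing the identity in the free group $F(X)$. Then the following are equivalent: (i) $w$ represents the identity in the polycyclic monoid $P(X)$; (ii) every prefix of $w$ represents a positive element or the identity of $F(X)$; (iii) the only minimum of $w$ is the identity of $F(X)$.
   Context: $\overline{X} = \{x, x^{-1} : x \in X\}$; letters of $X$ are positive generators and letters $x^{-1}$ negative generators. $F(X)$ is the free group with presentation $\langle \overline{X} \mid xx^{-1} = x^{-1}x = 1 \ (x \in X)\rangle$. The polycyclic monoid $P(X)$ is the monoid of partial functions on $X^*$ (composed left to right: $fg$ means apply $f$ then $g$) generated by $x: u \mapsto ux$ (defined everywhere) and $x^{-1}: ux \mapsto u$ (defined on $X^*x$), $x \in X$; a word over $\overline{X}$ represents the identity of $P(X)$ exactly when it can be reduced to the empty word by successively deleting factors $xx^{-1}$ with $x \in X$. An element of $F(X)$ is positive if it is a product of one or more positive generators. For $w \in \overline{X}^*$ and $g \in F(X)$, $g$ is a minimum of $w$ if (a) some prefix of $w$ represents $g$, and (b) no prefix of $w$ representing $g$ is immediately followed (in $w$) by a negative generator. *)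

theory Defs
  imports Main
begin

text \<open>Letters of the doubled alphabet: (x, True) is the positive generator x,
  (x, False) is the negative generator x^{-1}.\<close>
type_synonym 'a letter = "'a \<times> bool"

definition letter_inv :: "'a letter \<Rightarrow> 'a letter" where
  "letter_inv l = (fst l, \<not> snd l)"

definition words :: "'a set \<Rightarrow> 'a letter list set" where
  "words X = lists (X \<times> UNIV)"

definition cancel_step :: "'a letter list \<Rightarrow> 'a letter list \<Rightarrow> bool" where
  "cancel_step u v \<longleftrightarrow> (\<exists>p q a. u = p @ [a, letter_inv a] @ q \<and> v = p @ q)"

definition fg_eq :: "'a letter list \<Rightarrow> 'a letter list \<Rightarrow> bool" where
  "fg_eq = (symclp cancel_step)\<^sup>*\<^sup>*"

definition fg_positive :: "'a set \<Rightarrow> 'a letter list \<Rightarrow> bool" where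
  "fg_positive X g \<longleftrightarrow> (\<exists>v. v \<noteq> [] \<and> set v \<subseteq> X \<times> {True} \<and> fg_eq g v)"

text \<open>Polycyclic monoid P(X): partial functions on X*, composed left to right.\<close>
fun pc_letter :: "'a letter \<Rightarrow> 'a list \<Rightarrow> 'a list option" where
  "pc_letter (x, True) u = Some (u @ [x])"
| "pc_letter (x, False) u =
     (if u \<noteq> [] \<and> last u = x then Some (butlast u) else None)"

fun pc_eval :: "'a letter list \<Rightarrow> 'a list \<Rightarrow> 'a list option" where
  "pc_eval [] u = Some u"
| "pc_eval (l # w) u = Option.bind (pc_letter l u) (pc_eval w)"

definition pc_is_identity :: "'a set \<Rightarrow> 'a letter list \<Rightarrow> bool" where
  "pc_is_identity X w \<longleftrightarrow> (\<forall>u \<in> lists X. pc_eval w u = Some u)"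

definition is_minimum :: "'a letter list \<Rightarrow> 'a letter list \<Rightarrow> bool" where
  "is_minimum w g \<longleftrightarrow>
     (\<exists>p s. w = p @ s \<and> fg_eq p g) \<and>
     (\<forall>p s. w = p @ s \<and> fg_eq p g \<longrightarrow> \<not> (s \<noteq> [] \<and> snd (hd s) = False))"

end

theory Submission
  imports Defs
begin

definition step :: "'a letter \<Rightarrow> 'a letter list \<Rightarrow> 'a letter list" where
  "step l s = (case s of [] \<Rightarrow> [l] | m # s' \<Rightarrow> if m = letter_inv l then s' else l # m # s')"

definition st :: "'a letter list \<Rightarrow> 'a letter list" where
  "st w = fold step w []"

lemma st_snoc[simp]: "st (p @ [l]) = step l (st p)" by (simp add: st_def)
lemma st_Nil[simp]: "st [] = []" by (simp add: st_def)
lemma st_append: "st (p @ q) = fold step q (st p)" by (simp add: st_def)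

fun rd :: "'a letter list \<Rightarrow> bool" where
  "rd (a # b # s) = (b \<noteq> letter_inv a \<and> rd (b # s))"
| "rd _ = True"

lemma inv_inv[simp]: "letter_inv (letter_inv a) = a" by (simp add: letter_inv_def)
lemma inv_eq_iff: "(b = letter_inv a) = (a = letter_inv b)" by (metis inv_inv)
lemma snd_inv[simp]: "snd (letter_inv a) = (\<not> snd a)" by (simp add: letter_inv_def)

lemma rd_step: "rd s \<Longrightarrow> rd (step l s)"
  by (cases s rule: rd.cases) (auto simp: step_def inv_eq_iff)

lemma rd_fold: "rd s \<Longrightarrow> rd (fold step w s)"
  by (induction w arbitrary: s) (auto simp: rd_step)

lemma rd_st: "rd (st w)" by (simp add: st_def rd_fold)

lemma step_cancel: "rd s \<Longrightarrow> step (letter_inv a) (step a s) = s"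
  by (cases s rule: rd.cases) (auto simp: step_def inv_eq_iff)

lemma cancel_st: "cancel_step u v \<Longrightarrow> st u = st v"
  unfolding cancel_step_def by (auto simp: st_append step_cancel rd_st)

lemma fg_equiv: "fg_eq = equivclp cancel_step" by (simp add: fg_eq_def equivclp_def)

lemma fg_st: "fg_eq u v \<Longrightarrow> st u = st v"
  unfolding fg_equiv by (induction rule: equivclp_induct) (auto dest: cancel_st)

lemma cancel_app: "cancel_step u v \<Longrightarrow> cancel_step (u @ x) (v @ x)"
  unfolding cancel_step_def by fastforce

lemma fg_app: "fg_eq u v \<Longrightarrow> fg_eq (u @ x) (v @ x)"
  unfolding fg_equiv
proof (induction rule: equivclp_induct)
  case base then show ?case by simp
next
  case (step y z)
  then show ?case by (meson cancel_app equivclp_into_equivclp)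
qed

lemma fg_rev_st: "fg_eq u (rev (st u))"
proof (induction u rule: rev_induct)
  case Nil then show ?case by (simp add: fg_equiv)
next
  case (snoc l p)
  have 1: "fg_eq (p @ [l]) (rev (st p) @ [l])" using fg_app[OF snoc] .
  show ?case
  proof (cases "st p")
    case Nil then show ?thesis using 1 by (simp add: step_def)
  next
    case (Cons m s)
    show ?thesis
    proof (cases "m = letter_inv l")
      case True
      have "cancel_step (rev s @ [m, letter_inv m] @ []) (rev s @ [])"
        unfolding cancel_step_def by blast
      then have "fg_eq (rev (st p) @ [l]) (rev s)" using Cons True
        by (simp add: fg_equiv r_into_equivclp)
      then show ?thesis using 1 Cons True
        by (simp add: step_def fg_equiv) (meson equivclp_trans)
    next
      case False then show ?thesis using 1 Cons by (simp add: step_def)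
    qed
  qed
qed

lemma fg_iff: "fg_eq u v \<longleftrightarrow> st u = st v"
proof
  assume "st u = st v"
  then show "fg_eq u v" using fg_rev_st[of u] fg_rev_st[of v] unfolding fg_equiv
    by (metis equivclp_sym equivclp_trans)
qed (rule fg_st)

definition pos :: "'a letter list \<Rightarrow> bool" where
  "pos s \<longleftrightarrow> (\<forall>x\<in>set s. snd x)"

lemma st_pos: "pos v \<Longrightarrow> st v = rev v"
proof (induction v rule: rev_induct)
  case (snoc l v)
  then have 1: "st v = rev v" and 2: "snd l" and 3: "\<forall>x\<in>set (rev v). snd x"
    by (auto simp: pos_def)
  have "step l (rev v) = l # rev v" using 2 3
    by (cases "rev v") (auto simp: step_def letter_inv_def)
  then show ?case using 1 by simp
qed simp

lemma set_step: "set (step l s) \<subseteq> insert l (set s)"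
  by (auto simp: step_def split: list.splits)

lemma set_fold: "set (fold step w s) \<subseteq> set w \<union> set s"
proof (induction w arbitrary: s)
  case (Cons a w)
  then show ?case using set_step[of a s] by fastforce
qed simp

lemma set_st: "set (st w) \<subseteq> set w" using set_fold[of w "[]"] by (simp add: st_def)

lemma length_step: "length (step l s) \<le> Suc (length s)"
  by (auto simp: step_def split: list.splits)

lemma length_fold: "length (fold step w s) \<le> length w + length s"
proof (induction w arbitrary: s)
  case (Cons a w)
  have "length (fold step w (step a s)) \<le> length w + length (step a s)" by (rule Cons.IH)
  then show ?case using length_step[of a s] by simp
qed simp

lemma length_st: "length (st w) \<le> length w" using length_fold[of w "[]"] by (simp add: st_def)

definition allpos :: "'a letter list \<Rightarrow> bool" where
  "allpos p \<longleftrightarrow> (\<forall>q r. p = q @ r \<longrightarrow> pos (st q))"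

lemma allpos_snoc: "allpos (p @ [l]) \<longleftrightarrow> allpos p \<and> pos (st (p @ [l]))"
proof
  assume A: "allpos (p @ [l])"
  have "allpos p" unfolding allpos_def
  proof (intro allI impI)
    fix q r assume "p = q @ r"
    then have "p @ [l] = q @ (r @ [l])" by simp
    then show "pos (st q)" using A unfolding allpos_def by blast
  qed
  moreover have "pos (st (p @ [l]))" using A unfolding allpos_def by (metis append_Nil2)
  ultimately show "allpos p \<and> pos (st (p @ [l]))" by blast
next
  assume B: "allpos p \<and> pos (st (p @ [l]))"
  show "allpos (p @ [l])" unfolding allpos_def
  proof (intro allI impI)
    fix q r assume e: "p @ [l] = q @ r"
    show "pos (st q)"
    proof (cases r rule: rev_cases)
      case Nil then show ?thesis using e B by simp
    next
      case (snoc r' x)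
      then have "p = q @ r'" using e by simp
      then show ?thesis using B unfolding allpos_def by blast
    qed
  qed
qed

lemma allpos_Nil[simp]: "allpos []" by (simp add: allpos_def pos_def)

lemma allpos_pos: "allpos p \<Longrightarrow> pos (st p)" by (simp add: allpos_def)

lemma pc_eval_Nil_fun[simp]: "pc_eval [] = Some" by (rule ext) simp

lemma pc_eval_append: "pc_eval (p @ q) u = Option.bind (pc_eval p u) (pc_eval q)"
  by (induction p arbitrary: u) (auto intro: Option.bind_cong simp: Option.bind_assoc)

lemma lemA: "allpos p \<Longrightarrow> pc_eval p u = Some (u @ map fst (rev (st p)))"
proof (induction p rule: rev_induct)
  case Nil then show ?case by simp
next
  case (snoc l p)
  have "allpos p \<and> pos (st (p @ [l]))" using snoc.prems by (simp only: allpos_snoc)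
  then have ap: "allpos p" and ps: "pos (step l (st p))" and pp: "pos (st p)"
    using allpos_pos by auto
  have ev: "pc_eval (p @ [l]) u = pc_letter l (u @ map fst (rev (st p)))"
    using snoc ap by (simp add: pc_eval_append)
  obtain x b where l: "l = (x, b)" by fastforce
  show ?case
  proof (cases "st p")
    case Nil then show ?thesis using ev ps l
      by (cases b) (auto simp: step_def pos_def)
  next
    case (Cons m s)
    then show ?thesis using ev ps pp l
      by (cases b; cases m) (auto simp: step_def pos_def letter_inv_def butlast_append split: if_splits)
  qed
qed

lemma lemB: "pc_eval (p @ s) [] \<noteq> None \<Longrightarrow> allpos p"
proof (induction p arbitrary: s rule: rev_induct)
  case Nil then show ?case by simp
next
  case (snoc l p)
  have ap: "allpos p" using snoc.IH[of "l # s"] snoc.prems by simp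
  then have pp: "pos (st p)" by (rule allpos_pos)
  have "pc_eval (p @ [l] @ s) [] = Option.bind (pc_letter l (map fst (rev (st p)))) (pc_eval s)"
    using lemA[OF ap, of "[]"] by (simp add: pc_eval_append)
  then have nn: "pc_letter l (map fst (rev (st p))) \<noteq> None" using snoc.prems
    by (cases "pc_letter l (map fst (rev (st p)))") auto
  obtain x b where l: "l = (x, b)" by fastforce
  have "pos (step l (st p))"
  proof (cases "st p")
    case Nil then show ?thesis using nn l
      by (cases b) (auto simp: step_def pos_def)
  next
    case (Cons m s)
    then show ?thesis using nn pp l
      by (cases b; cases m) (auto simp: step_def pos_def letter_inv_def split: if_splits)
  qed
  then show ?case using ap allpos_snoc st_snoc by metis
qed

lemma lemC: "st p = t @ r \<Longrightarrow> st (p @ s) = [] \<Longrightarrow> r \<noteq> [] \<Longrightarrow>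
   \<exists>s1 s2. s = s1 @ s2 \<and> st (p @ s1) = r"
proof (induction s arbitrary: p t)
  case Nil then show ?case by simp
next
  case (Cons l s)
  show ?case
  proof (cases t)
    case Nil
    then have "l # s = [] @ (l # s) \<and> st (p @ []) = r" using Cons.prems by simp
    then show ?thesis by blast
  next
    case (Cons m t')
    obtain t2 where t2: "st (p @ [l]) = t2 @ r"
      using Cons Cons.prems(1) by (cases "m = letter_inv l") (auto simp: step_def)
    have "st ((p @ [l]) @ s) = []" using Cons.prems by simp
    from Cons.IH[OF t2 this Cons.prems(3)] obtain s1 s2 where
      "s = s1 @ s2" "st ((p @ [l]) @ s1) = r" by blast
    then show ?thesis by (intro exI[of _ "l # s1"] exI[of _ s2]) auto
  qed
qed

lemma lemD: "w = p @ s \<Longrightarrow> st p = r \<Longrightarrow> r \<noteq> [] \<Longrightarrow> st w = [] \<Longrightarrow> pos r \<Longrightarrow>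
  \<exists>p' s'. w = p' @ s' \<and> st p' = r \<and> s' \<noteq> [] \<and> \<not> snd (hd s')"
proof (induction "length s" arbitrary: p s rule: less_induct)
  case less
  show ?case
  proof (cases s)
    case Nil then show ?thesis using less.prems by simp
  next
    case (Cons l s0)
    show ?thesis
    proof (cases "snd l")
      case False
      then have "w = p @ s \<and> st p = r \<and> s \<noteq> [] \<and> \<not> snd (hd s)" using less.prems Cons by simp
      then show ?thesis by blast
    next
      case True
      have "st (p @ [l]) = [l] @ r" using True less.prems
        by (cases r) (auto simp: step_def pos_def letter_inv_def)
      moreover have "st ((p @ [l]) @ s0) = []" using less.prems Cons by simp
      ultimately obtain s1 s2 where s12: "s0 = s1 @ s2" "st ((p @ [l]) @ s1) = r"
        using lemC less.prems(3) by blast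
      have "length s2 < length s" using s12 Cons by simp
      moreover have "w = (p @ [l] @ s1) @ s2" using less.prems Cons s12 by simp
      ultimately show ?thesis using less.hyps[of s2 "p @ [l] @ s1"] less.prems s12 by auto
    qed
  qed
qed

lemma lemE: "\<not> allpos p \<Longrightarrow> \<exists>q r. p = q @ r \<and> st q \<noteq> [] \<and> \<not> snd (hd (st q))"
proof (induction p rule: rev_induct)
  case Nil then show ?case by simp
next
  case (snoc l p)
  show ?case
  proof (cases "allpos p")
    case False
    then obtain q r where "p = q @ r \<and> st q \<noteq> [] \<and> \<not> snd (hd (st q))" using snoc.IH by blast
    then show ?thesis by (intro exI[of _ q] exI[of _ "r @ [l]"]) auto
  next
    case True
    have "\<not> (allpos p \<and> pos (st (p @ [l])))" using snoc.prems allpos_snoc by metis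
    then have pp: "pos (st p)" and np: "\<not> pos (step l (st p))"
      using True allpos_pos by auto
    have "step l (st p) \<noteq> [] \<and> \<not> snd (hd (step l (st p)))"
      using pp np by (cases "st p") (auto simp: step_def pos_def split: if_splits)
    then show ?thesis by (intro exI[of _ "p @ [l]"] exI[of _ "[]"]) auto
  qed
qed

lemma ii_iff:
  assumes "w \<in> words X"
  shows "(\<forall>p s. w = p @ s \<longrightarrow> fg_positive X p \<or> fg_eq p []) \<longleftrightarrow> allpos w"
proof
  assume H: "\<forall>p s. w = p @ s \<longrightarrow> fg_positive X p \<or> fg_eq p []"
  show "allpos w" unfolding allpos_def
  proof (intro allI impI)
    fix q r assume "w = q @ r"
    then have "fg_positive X q \<or> fg_eq q []" using H by blast
    then show "pos (st q)"
    proof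
      assume "fg_positive X q"
      then obtain v where "set v \<subseteq> X \<times> {True}" "fg_eq q v" unfolding fg_positive_def by blast
      moreover have "pos v" using \<open>set v \<subseteq> X \<times> {True}\<close> by (auto simp: pos_def)
      ultimately show ?thesis using st_pos[of v] by (auto simp: fg_iff pos_def)
    qed (simp add: fg_iff pos_def)
  qed
next
  assume A: "allpos w"
  show "\<forall>p s. w = p @ s \<longrightarrow> fg_positive X p \<or> fg_eq p []"
  proof (intro allI impI)
    fix p s assume ps: "w = p @ s"
    then have pp: "pos (st p)" using A by (auto simp: allpos_def)
    have "set (st p) \<subseteq> X \<times> UNIV" using set_st[of p] assms ps by (auto simp: words_def)
    then have sub: "set (rev (st p)) \<subseteq> X \<times> {True}" using pp by (auto simp: pos_def)
    show "fg_positive X p \<or> fg_eq p []"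
    proof (cases "st p = []")
      case True then show ?thesis by (simp add: fg_iff)
    next
      case False
      then show ?thesis using sub fg_rev_st[of p] unfolding fg_positive_def
        by (intro disjI1 exI[of _ "rev (st p)"]) auto
    qed
  qed
qed

lemma i_iff:
  assumes "st w = []"
  shows "pc_is_identity X w \<longleftrightarrow> allpos w"
proof
  assume "pc_is_identity X w"
  then have "pc_eval (w @ []) [] \<noteq> None" by (auto simp: pc_is_identity_def)
  then show "allpos w" by (rule lemB)
next
  assume "allpos w"
  then show "pc_is_identity X w" using lemA[OF \<open>allpos w\<close>] assms by (simp add: pc_is_identity_def)
qed

lemma min_iff: "is_minimum w g \<longleftrightarrow>
   (\<exists>p s. w = p @ s \<and> st p = st g) \<and>
   (\<forall>p s. w = p @ s \<and> st p = st g \<longrightarrow> \<not> (s \<noteq> [] \<and> \<not> snd (hd s)))"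
  by (simp add: is_minimum_def fg_iff)

lemma iii_from_ii:
  assumes A: "allpos w" and W: "st w = []"
  shows "is_minimum w g \<longleftrightarrow> st g = []"
proof
  assume M: "is_minimum w g"
  show "st g = []"
  proof (rule ccontr)
    assume ne: "st g \<noteq> []"
    from M obtain p s where ps: "w = p @ s" "st p = st g" unfolding min_iff by blast
    have "pos (st g)" using A ps by (auto simp: allpos_def)
    from lemD[OF ps ne W this] M show False unfolding min_iff by blast
  qed
next
  assume g: "st g = []"
  have "\<not> (s \<noteq> [] \<and> \<not> snd (hd s))" if "w = p @ s" "st p = []" for p s
  proof
    assume s: "s \<noteq> [] \<and> \<not> snd (hd s)"
    then obtain l s' where "s = l # s'" by (cases s) auto
    then have "w = (p @ [l]) @ s'" "\<not> snd l" using that s by auto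
    then have "pos (st (p @ [l]))" using A unfolding allpos_def by blast
    moreover have "st (p @ [l]) = [l]" using \<open>st p = []\<close> by (simp add: step_def)
    ultimately show False using \<open>\<not> snd l\<close> unfolding pos_def by simp
  qed
  note H = this
  have "w = [] @ w \<and> st [] = st g" using g by simp
  then have "\<exists>p s. w = p @ s \<and> st p = st g" by blast
  moreover have "\<forall>p s. w = p @ s \<and> st p = st g \<longrightarrow> \<not> (s \<noteq> [] \<and> \<not> snd (hd s))"
    using H g by simp
  ultimately show "is_minimum w g" unfolding min_iff by (rule conjI)
qed

lemma ii_from_iii:
  assumes H: "\<forall>g. is_minimum w g \<longleftrightarrow> fg_eq g []"
  shows "allpos w"
proof (rule ccontr)
  assume "\<not> allpos w"
  define P where "P q \<longleftrightarrow> (\<exists>r. w = q @ r) \<and> st q \<noteq> [] \<and> \<not> snd (hd (st q))" for q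
  obtain q0 where "P q0" using lemE[OF \<open>\<not> allpos w\<close>] P_def by blast
  moreover have "\<forall>y. P y \<longrightarrow> (length \<circ> st) y < Suc (length w)"
  proof (intro allI impI)
    fix y assume "P y"
    then obtain r where "w = y @ r" by (auto simp: P_def)
    then show "(length \<circ> st) y < Suc (length w)" using length_st[of y] by simp
  qed
  ultimately obtain q where Pq: "P q" and mx: "\<forall>y. P y \<longrightarrow> (length \<circ> st) y \<le> (length \<circ> st) q"
    using Lattices_Big.ex_has_greatest_nat[of P q0 "length \<circ> st"] by blast
  have "is_minimum w q" unfolding min_iff
  proof (intro conjI allI impI)
    show "\<exists>p s. w = p @ s \<and> st p = st q" using Pq P_def by blast
  next
    fix p s assume ps: "w = p @ s \<and> st p = st q"
    show "\<not> (s \<noteq> [] \<and> \<not> snd (hd s))"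
    proof
      assume s: "s \<noteq> [] \<and> \<not> snd (hd s)"
      then obtain l s' where "s = l # s'" by (cases s) auto
      then have w: "w = (p @ [l]) @ s'" and nl: "\<not> snd l" using ps s by auto
      have "st (p @ [l]) = l # st q" using ps Pq nl
        by (cases "st q") (auto simp: P_def step_def letter_inv_def)
      then have "P (p @ [l])" using w nl P_def by auto
      then show False using mx \<open>st (p @ [l]) = l # st q\<close> by fastforce
    qed
  qed
  then have "st q = []" using H by (simp add: fg_iff)
  then show False using Pq P_def by simp
qed

theorem proposition4p8:
  fixes X :: "'a set" and w :: "'a letter list"
  assumes "finite X"
    and "w \<in> words X"
    and "fg_eq w []"
  shows "(pc_is_identity X w \<longleftrightarrow>
            (\<forall>p s. w = p @ s \<longrightarrow> fg_positive X p \<or> fg_eq p []))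
       \<and> (pc_is_identity X w \<longleftrightarrow>
            (\<forall>g. is_minimum w g \<longleftrightarrow> fg_eq g []))"
proof -
  have W: "st w = []" using assms(3) by (simp add: fg_iff)
  have 1: "pc_is_identity X w \<longleftrightarrow> allpos w" using i_iff[OF W] .
  have 2: "(\<forall>p s. w = p @ s \<longrightarrow> fg_positive X p \<or> fg_eq p []) \<longleftrightarrow> allpos w"
    using ii_iff[OF assms(2)] .
  have 3: "(\<forall>g. is_minimum w g \<longleftrightarrow> fg_eq g []) \<longleftrightarrow> allpos w"
  proof
    assume "\<forall>g. is_minimum w g \<longleftrightarrow> fg_eq g []"
    then show "allpos w" by (rule ii_from_iii)
  next
    assume "allpos w"
    then show "\<forall>g. is_minimum w g \<longleftrightarrow> fg_eq g []"
      using iii_from_ii[OF _ W] by (simp add: fg_iff)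
  qed
  show ?thesis using 1 2 3 by blast
qed

end
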